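(* Let $\bm{\mu}_0,\bm{\mu}_1\in\mathbb{R}^d$, $\epsilon>0$, and define the GLRT costs $C_k(\mathbf{x})=\|g_\epsilon(\mathbf{x}-\bm{\mu}_k)\|_2^2$ for $k=0,1$. Set $\mathbf{e}^*=-\epsilon\,\mathrm{sign}(\bm{\mu}_0-\bm{\mu}_1)$, with $\mathrm{sign}$ applied coordinate-wise. Then for every $\mathbf{n}\in\mathbb{R}^d$ and every $\mathbf{e}\in\mathbb{R}^d$ with $\|\mathbf{e}\|_\infty\le\epsilon$, $$C_1(\bm{\mu}_0+\mathbf{e}+\mathbf{n})-C_0(\bm{\mu}_0+\mathbf{e}+\mathbf{n})\ \ge\ C_1(\bm{\mu}_0+\mathbf{e}^*+\mathbf{n})-C_0(\bm{\mu}_0+\mathbf{e}^*+\mathbf{n}).$$ Consequently, under hypothesis $\mathcal{H}_0$, where $\mathbf{X}=\bm{\mu}_0+\mathbf{e}+\mathbf{N}$ with $\mathbf{N}\sim\mathcal{N}(\mathbf{0},\sigma^2 I_d)$ and $\sigma>0$: (i) for every realization $\mathbf{n}$, if some admissible $\mathbf{e}$ makes $C_1<C_0$, then $\mathbf{e}^*$ also makes $C_1<C_0$ (noise-aware optimality); (ii) $\mathbf{e}^*$ maximizes $\Pr(C_1(\mathbf{X})<C_0(\mathbf{X}))$ over all $\mathbf{e}$ with $\|\mathbf{e}\|_\infty\le\epsilon$ (noise-agnostic optimality). Symmetrically, under $\mathcal{H}_1$ the attack $-\epsilon\,\mathrm{sign}(\bm{\mu}_1-\bm{\mu}_0)$ is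 worst-case in both senses.
   Context: For $\epsilon>0$, $g_\epsilon(x)=\mathrm{sign}(x)\max(0,|x|-\epsilon)$ with $\mathrm{sign}(0)=0$, applied coordinate-wise. The GLRT classifier decides $\mathcal{H}_1$ when $C_1<C_0$. An attack is a vector $\mathbf{e}$ with $\|\mathbf{e}\|_\infty\le\epsilon$, which may depend on the true hypothesis. *)

theory Defs
  imports "HOL-Analysis.Analysis" "HOL-Probability.Probability"
begin

definition soft_thr :: "real \<Rightarrow> real \<Rightarrow> real" where
  "soft_thr eps x = sgn x * max 0 (\<bar>x\<bar> - eps)"

definition glrt_cost :: "real \<Rightarrow> real ^ 'd \<Rightarrow> real ^ 'd \<Rightarrow> real" where
  "glrt_cost eps mu x = (norm (\<chi> i. soft_thr eps ((x - mu) $ i)))\<^sup>2"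

definition vsgn :: "real ^ 'd \<Rightarrow> real ^ 'd" where
  "vsgn v = (\<chi> i. sgn (v $ i))"

definition norm_inf :: "real ^ 'd \<Rightarrow> real" where
  "norm_inf v = Max (range (\<lambda>i. \<bar>v $ i\<bar>))"

definition gauss_iso :: "real \<Rightarrow> (real ^ 'd) measure" where
  "gauss_iso \<sigma> = density lborel (\<lambda>x. ennreal (\<Prod>i\<in>UNIV. normal_density 0 \<sigma> (x $ i)))"

end

theory Submission
  imports Defs
begin


lemma soft_thr_alt: "e > 0 \<Longrightarrow> soft_thr e x = max 0 (x - e) - max 0 (- x - e)"
  unfolding soft_thr_def by (auto simp: sgn_if max_def)

lemma cont_soft: "e > 0 \<Longrightarrow> continuous_on UNIV (soft_thr e)"
proof -
  assume e: "e > 0"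
  have "soft_thr e = (\<lambda>x. max 0 (x - e) - max 0 (- x - e))" using soft_thr_alt[OF e] by auto
  then show ?thesis by (simp add: continuous_intros)
qed

lemma cost_sum: "glrt_cost e mu x = (\<Sum>i\<in>UNIV. (soft_thr e (x$i - mu$i))^2)"
  unfolding glrt_cost_def power2_norm_eq_inner inner_vec_def by (simp add: power2_eq_square)

lemma L:
  fixes a b d :: real
  assumes d: "d \<ge> 0" and ab: "a \<le> b"
  shows "(max 0 (a + d))^2 - (max 0 a)^2 \<le> (max 0 (b + d))^2 - (max 0 b)^2"
proof -
  have m: "max 0 (a+d) \<le> max 0 (b+d)" "max 0 a \<le> max 0 b" using ab by auto
  consider "b \<le> 0 \<and> b + d \<le> 0" | "a + d \<le> 0 \<and> b \<ge> 0" | "a + d \<le> 0 \<and> b \<le> 0 \<and> b + d \<ge> 0"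
    | "a \<le> 0 \<and> a + d \<ge> 0 \<and> b \<le> 0" | "a \<le> 0 \<and> a + d \<ge> 0 \<and> b \<ge> 0" | "a \<ge> 0"
    using ab d by linarith
  then show ?thesis
  proof cases
    case 1
    then have "max 0 (a+d) = 0" "max 0 a = 0" "max 0 (b+d) = 0" "max 0 b = 0" using ab by auto
    then show ?thesis by simp
  next
    case 2
    then have "max 0 (a+d) = 0" "max 0 a = 0" "max 0 (b+d) = b+d" "max 0 b = b" using ab d by auto
    moreover have "0 \<le> b*d" using 2 d by simp
    ultimately show ?thesis by (simp add: power2_eq_square algebra_simps)
  next
    case 3
    then have "max 0 (a+d) = 0" "max 0 a = 0" "max 0 (b+d) = b+d" "max 0 b = 0" using ab by auto
    then show ?thesis by simp
  next
    case 4
    then have "max 0 (a+d) = a+d" "max 0 a = 0" "max 0 (b+d) = b+d" "max 0 b = 0" using ab by auto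
    then show ?thesis using ab 4 by (simp add: power_mono)
  next
    case 5
    then have "max 0 (a+d) = a+d" "max 0 a = 0" "max 0 (b+d) = b+d" "max 0 b = b" using ab by auto
    moreover have P: "(a+d)^2 \<le> d^2" using 5 by (intro power_mono) auto
    moreover have Q: "0 \<le> b*d" using 5 d by simp
    moreover have R: "(b+d)^2 - b^2 = d^2 + 2*(b*d)" by (simp add: power2_eq_square algebra_simps)
    have "(a+d)^2 \<le> (b+d)^2 - b^2" using P Q R by linarith
    ultimately show ?thesis by simp
  next
    case 6
    then have "max 0 (a+d) = a+d" "max 0 a = a" "max 0 (b+d) = b+d" "max 0 b = b" using ab d by auto
    moreover have "a*d \<le> b*d" using ab d by (rule mult_right_mono)
    ultimately show ?thesis by (simp add: power2_eq_square algebra_simps)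
  qed
qed

lemma h_alt: "e > 0 \<Longrightarrow> (soft_thr e t)^2 = (max 0 (t - e))^2 + (max 0 (- t - e))^2"
  by (simp add: soft_thr_alt max_def power2_eq_square algebra_simps)

lemma incdiff:
  assumes e: "e > 0" and d: "d \<ge> 0" and ab: "a \<le> b"
  shows "(soft_thr e (d + a))^2 - (soft_thr e a)^2 \<le> (soft_thr e (d + b))^2 - (soft_thr e b)^2"
proof -
  have 1: "(max 0 ((a - e) + d))^2 - (max 0 (a - e))^2 \<le> (max 0 ((b - e) + d))^2 - (max 0 (b - e))^2"
    using L[OF d, of "a - e" "b - e"] ab by simp
  have 2: "(max 0 ((-b-e-d) + d))^2 - (max 0 (-b-e-d))^2 \<le> (max 0 ((-a-e-d) + d))^2 - (max 0 (-a-e-d))^2"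
    using L[OF d, of "-b-e-d" "-a-e-d"] ab by simp
  show ?thesis unfolding h_alt[OF e] using 1 2 by (simp add: algebra_simps)
qed

lemma coord:
  assumes e: "\<epsilon> > 0" and x: "\<bar>x\<bar> \<le> \<epsilon>"
  shows "(soft_thr \<epsilon> (\<delta> + x + m))^2 - (soft_thr \<epsilon> (x + m))^2
     \<ge> (soft_thr \<epsilon> (\<delta> + (- \<epsilon> * sgn \<delta>) + m))^2 - (soft_thr \<epsilon> ((- \<epsilon> * sgn \<delta>) + m))^2"
proof (cases "\<delta> > 0")
  case True
  then show ?thesis using incdiff[OF e, of \<delta> "-\<epsilon> + m" "x + m"] x by (simp add: algebra_simps)
next
  case False
  show ?thesis
  proof (cases "\<delta> = 0")
    case True then show ?thesis by simp
  next
    case F2: False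
    with False have "\<delta> < 0" by simp
    then show ?thesis using incdiff[OF e, of "-\<delta>" "x + m + \<delta>" "\<epsilon> + m + \<delta>"] x
      by (simp add: algebra_simps)
  qed
qed

lemma norm_inf_le: "norm_inf (v :: real ^ 'd) \<le> c \<Longrightarrow> \<bar>v $ i\<bar> \<le> c"
proof -
  assume c: "norm_inf v \<le> c"
  have "\<bar>v $ i\<bar> \<le> Max (range (\<lambda>i. \<bar>v $ i\<bar>))" by (rule Max_ge) auto
  then show ?thesis using c unfolding norm_inf_def by linarith
qed

lemma mainineq:
  fixes a b e n :: "real ^ 'd"
  assumes ep: "\<epsilon> > 0" and ne: "norm_inf e \<le> \<epsilon>"
  shows "glrt_cost \<epsilon> b (a + e + n) - glrt_cost \<epsilon> a (a + e + n) \<ge>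
         glrt_cost \<epsilon> b (a + (- \<epsilon> *\<^sub>R vsgn (a - b)) + n) - glrt_cost \<epsilon> a (a + (- \<epsilon> *\<^sub>R vsgn (a - b)) + n)"
proof -
  have "\<And>i. (soft_thr \<epsilon> ((a$i - b$i) + (- \<epsilon> * sgn (a$i - b$i)) + n$i))^2 - (soft_thr \<epsilon> ((- \<epsilon> * sgn (a$i - b$i)) + n$i))^2
     \<le> (soft_thr \<epsilon> ((a$i - b$i) + e$i + n$i))^2 - (soft_thr \<epsilon> (e$i + n$i))^2"
    by (rule coord[OF ep norm_inf_le[OF ne]])
  then have "(\<Sum>i\<in>UNIV. (soft_thr \<epsilon> ((a$i - b$i) + (- \<epsilon> * sgn (a$i - b$i)) + n$i))^2 - (soft_thr \<epsilon> ((- \<epsilon> * sgn (a$i - b$i)) + n$i))^2)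
     \<le> (\<Sum>i\<in>UNIV. (soft_thr \<epsilon> ((a$i - b$i) + e$i + n$i))^2 - (soft_thr \<epsilon> (e$i + n$i))^2)"
    by (rule sum_mono)
  then show ?thesis unfolding cost_sum sum_subtractf[symmetric]
    by (simp add: vsgn_def algebra_simps)
qed



lemma basis_vec: "(Basis :: (real^'d) set) = range (\<lambda>i. axis i 1)"
  unfolding Basis_vec_def by auto

lemma gauss_finite:
  assumes s: "\<sigma> > 0"
  shows "finite_measure (gauss_iso \<sigma> :: (real^'d) measure)"
proof (rule finite_measureI)
  have nd1: "(\<integral>\<^sup>+t. ennreal (normal_density 0 \<sigma> t) \<partial>lborel) = 1"
    using prob_space.emeasure_space_1[OF prob_space_normal_density[OF s, of 0]]
    by (simp add: emeasure_density)
  have inj: "inj (\<lambda>i::'d. axis i (1::real))" by (auto simp: inj_def axis_eq_axis)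
  have eq: "\<And>x::real^'d. ennreal (\<Prod>i\<in>UNIV. normal_density 0 \<sigma> (x $ i))
      = (\<Prod>b\<in>Basis. ennreal (normal_density 0 \<sigma> (x \<bullet> b)))"
  proof -
    fix x :: "real^'d"
    have "(\<Prod>b\<in>Basis. ennreal (normal_density 0 \<sigma> (x \<bullet> b)))
        = (\<Prod>i\<in>UNIV. ennreal (normal_density 0 \<sigma> (x \<bullet> axis i 1)))"
      unfolding basis_vec by (subst prod.reindex[OF inj]) simp
    also have "\<dots> = ennreal (\<Prod>i\<in>UNIV. normal_density 0 \<sigma> (x $ i))"
      by (simp add: inner_axis prod_ennreal normal_density_nonneg)
    finally show "ennreal (\<Prod>i\<in>UNIV. normal_density 0 \<sigma> (x $ i))
      = (\<Prod>b\<in>Basis. ennreal (normal_density 0 \<sigma> (x \<bullet> b)))" by simp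
  qed
  have "emeasure (gauss_iso \<sigma>) (space (gauss_iso \<sigma>) :: (real^'d) set)
     = (\<integral>\<^sup>+x. (\<Prod>b\<in>Basis. ennreal (normal_density 0 \<sigma> (x \<bullet> b))) \<partial>(lborel :: (real^'d) measure))"
    unfolding gauss_iso_def eq
    by (subst emeasure_density) auto
  also have "\<dots> = (\<Prod>b\<in>(Basis :: (real^'d) set). (\<integral>\<^sup>+t. ennreal (normal_density 0 \<sigma> t) \<partial>lborel))"
    by (rule nn_integral_lborel_prod) auto
  also have "\<dots> = 1" using nd1 by simp
  finally show "emeasure (gauss_iso \<sigma>) (space (gauss_iso \<sigma>) :: (real^'d) set) \<noteq> \<infinity>" by simp
qed

lemma sets_gauss: "sets (gauss_iso \<sigma>) = sets borel"
  unfolding gauss_iso_def by simp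



lemma cost_cont:
  assumes e: "\<epsilon> > 0"
  shows "continuous_on UNIV (\<lambda>n::real^'d. glrt_cost \<epsilon> mu (c + n))"
proof -
  have "continuous_on UNIV (\<lambda>n::real^'d. soft_thr \<epsilon> ((c + n)$i - mu$i))" for i
    by (rule continuous_on_compose2[OF cont_soft[OF e]]) (auto intro!: continuous_intros)
  then show ?thesis unfolding cost_sum
    by (intro continuous_intros) auto
qed

lemma cost_meas[measurable]:
  assumes e: "\<epsilon> > 0"
  shows "(\<lambda>n::real^'d. glrt_cost \<epsilon> mu (c + n)) \<in> borel_measurable borel"
  by (rule borel_measurable_continuous_onI[OF cost_cont[OF e]])

lemma set1: "\<epsilon> > 0 \<Longrightarrow> {n::real^'d. glrt_cost \<epsilon> m1 (c + n) < glrt_cost \<epsilon> m0 (c + n)} \<in> sets borel"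
  by measurable

lemma set2: "\<epsilon> > 0 \<Longrightarrow> {n::real^'d. \<not> glrt_cost \<epsilon> m1 (c + n) < glrt_cost \<epsilon> m0 (c + n)} \<in> sets borel"
  by measurable

theorem proposition2:
  fixes \<mu>0 \<mu>1 :: "real ^ 'd" and \<epsilon> \<sigma> :: real
  assumes eps_pos: "\<epsilon> > 0" and sigma_pos: "\<sigma> > 0"
  defines "C0 \<equiv> glrt_cost \<epsilon> \<mu>0" and "C1 \<equiv> glrt_cost \<epsilon> \<mu>1"
      and "e0 \<equiv> - \<epsilon> *\<^sub>R vsgn (\<mu>0 - \<mu>1)"
      and "e1 \<equiv> - \<epsilon> *\<^sub>R vsgn (\<mu>1 - \<mu>0)"
  shows
    \<comment> \<open>main inequality (H0 attack)\<close>
    "(\<forall>n e. norm_inf e \<le> \<epsilon> \<longrightarrow>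
        C1 (\<mu>0 + e + n) - C0 (\<mu>0 + e + n) \<ge> C1 (\<mu>0 + e0 + n) - C0 (\<mu>0 + e0 + n))
     \<comment> \<open>(i) noise-aware optimality under H0\<close>
     \<and> (\<forall>n. (\<exists>e. norm_inf e \<le> \<epsilon> \<and> C1 (\<mu>0 + e + n) < C0 (\<mu>0 + e + n))
            \<longrightarrow> C1 (\<mu>0 + e0 + n) < C0 (\<mu>0 + e0 + n))
     \<comment> \<open>(ii) noise-agnostic optimality under H0\<close>
     \<and> (\<forall>e. norm_inf e \<le> \<epsilon> \<longrightarrow>
          measure (gauss_iso \<sigma>) {n. C1 (\<mu>0 + e + n) < C0 (\<mu>0 + e + n)}
          \<le> measure (gauss_iso \<sigma>) {n. C1 (\<mu>0 + e0 + n) < C0 (\<mu>0 + e0 + n)})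
     \<comment> \<open>symmetric statements under H1 (error = not deciding H1)\<close>
     \<and> (\<forall>n e. norm_inf e \<le> \<epsilon> \<longrightarrow>
        C0 (\<mu>1 + e + n) - C1 (\<mu>1 + e + n) \<ge> C0 (\<mu>1 + e1 + n) - C1 (\<mu>1 + e1 + n))
     \<and> (\<forall>n. (\<exists>e. norm_inf e \<le> \<epsilon> \<and> \<not> C1 (\<mu>1 + e + n) < C0 (\<mu>1 + e + n))
            \<longrightarrow> \<not> C1 (\<mu>1 + e1 + n) < C0 (\<mu>1 + e1 + n))
     \<and> (\<forall>e. norm_inf e \<le> \<epsilon> \<longrightarrow>
          measure (gauss_iso \<sigma>) {n. \<not> C1 (\<mu>1 + e + n) < C0 (\<mu>1 + e + n)}
          \<le> measure (gauss_iso \<sigma>) {n. \<not> C1 (\<mu>1 + e1 + n) < C0 (\<mu>1 + e1 + n)})"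
proof -
  have M0: "\<forall>n e. norm_inf e \<le> \<epsilon> \<longrightarrow>
        C1 (\<mu>0 + e + n) - C0 (\<mu>0 + e + n) \<ge> C1 (\<mu>0 + e0 + n) - C0 (\<mu>0 + e0 + n)"
    unfolding C0_def C1_def e0_def using mainineq[OF eps_pos] by blast
  have M1: "\<forall>n e. norm_inf e \<le> \<epsilon> \<longrightarrow>
        C0 (\<mu>1 + e + n) - C1 (\<mu>1 + e + n) \<ge> C0 (\<mu>1 + e1 + n) - C1 (\<mu>1 + e1 + n)"
    unfolding C0_def C1_def e1_def using mainineq[OF eps_pos] by blast
  have I0: "\<forall>n. (\<exists>e. norm_inf e \<le> \<epsilon> \<and> C1 (\<mu>0 + e + n) < C0 (\<mu>0 + e + n))
            \<longrightarrow> C1 (\<mu>0 + e0 + n) < C0 (\<mu>0 + e0 + n)"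
  proof (intro allI impI)
    fix n assume "\<exists>e. norm_inf e \<le> \<epsilon> \<and> C1 (\<mu>0 + e + n) < C0 (\<mu>0 + e + n)"
    then obtain e where e: "norm_inf e \<le> \<epsilon>" and l: "C1 (\<mu>0 + e + n) < C0 (\<mu>0 + e + n)" by blast
    have "C1 (\<mu>0 + e0 + n) - C0 (\<mu>0 + e0 + n) \<le> C1 (\<mu>0 + e + n) - C0 (\<mu>0 + e + n)"
      using M0 e by blast
    with l show "C1 (\<mu>0 + e0 + n) < C0 (\<mu>0 + e0 + n)" by linarith
  qed
  have I1: "\<forall>n. (\<exists>e. norm_inf e \<le> \<epsilon> \<and> \<not> C1 (\<mu>1 + e + n) < C0 (\<mu>1 + e + n))
            \<longrightarrow> \<not> C1 (\<mu>1 + e1 + n) < C0 (\<mu>1 + e1 + n)"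
  proof (intro allI impI)
    fix n assume "\<exists>e. norm_inf e \<le> \<epsilon> \<and> \<not> C1 (\<mu>1 + e + n) < C0 (\<mu>1 + e + n)"
    then obtain e where e: "norm_inf e \<le> \<epsilon>" and l: "\<not> C1 (\<mu>1 + e + n) < C0 (\<mu>1 + e + n)" by blast
    have "C0 (\<mu>1 + e1 + n) - C1 (\<mu>1 + e1 + n) \<le> C0 (\<mu>1 + e + n) - C1 (\<mu>1 + e + n)"
      using M1 e by blast
    with l show "\<not> C1 (\<mu>1 + e1 + n) < C0 (\<mu>1 + e1 + n)" by linarith
  qed
  interpret F: finite_measure "gauss_iso \<sigma> :: (real^'d) measure" by (rule gauss_finite[OF sigma_pos])
  have P0: "\<forall>e. norm_inf e \<le> \<epsilon> \<longrightarrow>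
          measure (gauss_iso \<sigma>) {n. C1 (\<mu>0 + e + n) < C0 (\<mu>0 + e + n)}
          \<le> measure (gauss_iso \<sigma>) {n. C1 (\<mu>0 + e0 + n) < C0 (\<mu>0 + e0 + n)}"
  proof (intro allI impI)
    fix e :: "real^'d" assume e: "norm_inf e \<le> \<epsilon>"
    show "measure (gauss_iso \<sigma>) {n. C1 (\<mu>0 + e + n) < C0 (\<mu>0 + e + n)}
          \<le> measure (gauss_iso \<sigma>) {n. C1 (\<mu>0 + e0 + n) < C0 (\<mu>0 + e0 + n)}"
    proof (rule F.finite_measure_mono)
      show "{n. C1 (\<mu>0 + e + n) < C0 (\<mu>0 + e + n)} \<subseteq> {n. C1 (\<mu>0 + e0 + n) < C0 (\<mu>0 + e0 + n)}"
        using I0 e by blast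
      show "{n. C1 (\<mu>0 + e0 + n) < C0 (\<mu>0 + e0 + n)} \<in> sets (gauss_iso \<sigma>)"
        unfolding sets_gauss C0_def C1_def using set1[OF eps_pos, of \<mu>1 "\<mu>0 + e0" \<mu>0]
        by (simp add: add.assoc)
    qed
  qed
  have P1: "\<forall>e. norm_inf e \<le> \<epsilon> \<longrightarrow>
          measure (gauss_iso \<sigma>) {n. \<not> C1 (\<mu>1 + e + n) < C0 (\<mu>1 + e + n)}
          \<le> measure (gauss_iso \<sigma>) {n. \<not> C1 (\<mu>1 + e1 + n) < C0 (\<mu>1 + e1 + n)}"
  proof (intro allI impI)
    fix e :: "real^'d" assume e: "norm_inf e \<le> \<epsilon>"
    show "measure (gauss_iso \<sigma>) {n. \<not> C1 (\<mu>1 + e + n) < C0 (\<mu>1 + e + n)}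
          \<le> measure (gauss_iso \<sigma>) {n. \<not> C1 (\<mu>1 + e1 + n) < C0 (\<mu>1 + e1 + n)}"
    proof (rule F.finite_measure_mono)
      show "{n. \<not> C1 (\<mu>1 + e + n) < C0 (\<mu>1 + e + n)} \<subseteq> {n. \<not> C1 (\<mu>1 + e1 + n) < C0 (\<mu>1 + e1 + n)}"
        using I1 e by blast
      show "{n. \<not> C1 (\<mu>1 + e1 + n) < C0 (\<mu>1 + e1 + n)} \<in> sets (gauss_iso \<sigma>)"
        unfolding sets_gauss C0_def C1_def using set2[OF eps_pos, of \<mu>1 "\<mu>1 + e1" \<mu>0]
        by (simp add: add.assoc)
    qed
  qed
  show ?thesis using M0 I0 P0 M1 I1 P1 by (intro conjI)
qed

end
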